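(* Let $v_1,\dots,v_n:[0,1]\to\mathbb R_{\ge0}$ be monotone non-decreasing subadditive valuations with budgets $B_i>0$, let $\bar v_i(y)=\min\{v_i(y),B_i\}$, let $r_1=\arg\max_i\bar v_i(\frac12)$, and let $\bar W^\dagger=\sup\{\bar W(y): y\in\mathbb R^n_{\ge0},\ y_{r_1}=0,\ \sum_{i\ne r_1}y_i=\frac12\}$. Then $\bar v_{r_1}(\frac12)+\bar W^\dagger\ge\frac12\bar W^*$.
   Context: Liquid welfare of an allocation $y\in\mathbb R^n_{\ge0}$: $\bar W(y)=\sum_i\min\{v_i(y_i),B_i\}$; $\bar W^*=\sup\{\bar W(y):y\in\mathbb R^n_{\ge0},\sum_iy_i=1\}$. Subadditive means $v_i(a+b)\le v_i(a)+v_i(b)$ whenever $a,b,a+b\in[0,1]$. *)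

theory Defs
  imports Complex_Main
begin

text \<open>Agents are indexed by i < n. Valuations v i are only meaningful on [0,1].\<close>

definition subadditive_on01 :: "(real \<Rightarrow> real) \<Rightarrow> bool" where
  "subadditive_on01 f \<longleftrightarrow>
     (\<forall>a b. a \<in> {0..1} \<and> b \<in> {0..1} \<and> a + b \<in> {0..1} \<longrightarrow> f (a + b) \<le> f a + f b)"

definition vbar :: "(nat \<Rightarrow> real \<Rightarrow> real) \<Rightarrow> (nat \<Rightarrow> real) \<Rightarrow> nat \<Rightarrow> real \<Rightarrow> real" where
  "vbar v B i t = min (v i t) (B i)"

definition liquid_welfare :: "nat \<Rightarrow> (nat \<Rightarrow> real \<Rightarrow> real) \<Rightarrow> (nat \<Rightarrow> real) \<Rightarrow> (nat \<Rightarrow> real) \<Rightarrow> real" where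
  "liquid_welfare n v B y = (\<Sum>i<n. min (v i (y i)) (B i))"

definition opt_liquid_welfare :: "nat \<Rightarrow> (nat \<Rightarrow> real \<Rightarrow> real) \<Rightarrow> (nat \<Rightarrow> real) \<Rightarrow> real" where
  "opt_liquid_welfare n v B =
     Sup {liquid_welfare n v B y | y. (\<forall>i<n. 0 \<le> y i) \<and> (\<Sum>i<n. y i) = 1}"

definition dagger_liquid_welfare :: "nat \<Rightarrow> (nat \<Rightarrow> real \<Rightarrow> real) \<Rightarrow> (nat \<Rightarrow> real) \<Rightarrow> nat \<Rightarrow> real" where
  "dagger_liquid_welfare n v B r =
     Sup {liquid_welfare n v B y | y. (\<forall>i<n. 0 \<le> y i) \<and> y r = 0 \<and>
            (\<Sum>i\<in>{..<n} - {r}. y i) = 1/2}"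

end

theory Submission
  imports Defs
begin

theorem mainTheorem15:
  fixes n :: nat and v :: "nat \<Rightarrow> real \<Rightarrow> real" and B :: "nat \<Rightarrow> real" and r :: nat
  assumes n2: "n \<ge> 2"
    and nonneg: "\<And>i t. i < n \<Longrightarrow> t \<in> {0..1} \<Longrightarrow> 0 \<le> v i t"
    and mono: "\<And>i. i < n \<Longrightarrow> mono_on {0..1} (v i)"
    and subadd: "\<And>i. i < n \<Longrightarrow> subadditive_on01 (v i)"
    and budget: "\<And>i. i < n \<Longrightarrow> B i > 0"
    and r: "r < n"
    and rmax: "\<And>i. i < n \<Longrightarrow> vbar v B i (1/2) \<le> vbar v B r (1/2)"
  shows "vbar v B r (1/2) + dagger_liquid_welfare n v B r \<ge> opt_liquid_welfare n v B / 2"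
proof -
  define j where "j = (if r = 0 then 1 else (0::nat))"
  have j: "j < n" "j \<noteq> r" using n2 unfolding j_def by auto
  have half: "min (v i t) (B i) \<le> 2 * min (v i (t/2)) (B i)" if "i < n" "0 \<le> t" "t \<le> 1" for i t
  proof -
    have "v i (t/2 + t/2) \<le> v i (t/2) + v i (t/2)"
    proof -
      have "\<forall>a b. a \<in> {0..1} \<and> b \<in> {0..1} \<and> a + b \<in> {0..1} \<longrightarrow> v i (a + b) \<le> v i a + v i b"
        using subadd[OF that(1)] unfolding subadditive_on01_def by blast
      hence "t/2 \<in> {0..1} \<and> t/2 \<in> {0..1} \<and> t/2 + t/2 \<in> {0..1} \<longrightarrow> v i (t/2 + t/2) \<le> v i (t/2) + v i (t/2)"
        by blast
      thus ?thesis using that by simp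
    qed
    hence "v i t \<le> 2 * v i (t/2)" by simp
    thus ?thesis using budget[OF that(1)] by linarith
  qed
  have monoi: "v i a \<le> v i b" if "i < n" "0 \<le> a" "a \<le> b" "b \<le> 1" for i a b
    using mono[OF that(1)] that by (auto simp: mono_on_def)
  let ?D = "{liquid_welfare n v B y | y. (\<forall>i<n. 0 \<le> y i) \<and> y r = 0 \<and>
            (\<Sum>i\<in>{..<n} - {r}. y i) = 1/2}"
  have bddD: "bdd_above ?D"
  proof (rule bdd_aboveI[where M="\<Sum>i<n. B i"])
    fix x assume "x \<in> ?D"
    then obtain y where "x = liquid_welfare n v B y" by auto
    thus "x \<le> (\<Sum>i<n. B i)" unfolding liquid_welfare_def by (simp add: sum_mono)
  qed
  have key: "liquid_welfare n v B y \<le> 2 * vbar v B r (1/2) + 2 * dagger_liquid_welfare n v B r"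
    if y0: "\<forall>i<n. 0 \<le> y i" and ys: "(\<Sum>i<n. y i) = 1" for y
  proof -
    have yle: "y i \<le> 1" if "i < n" for i
    proof -
      have "y i \<le> (\<Sum>k<n. y k)" using that y0 by (intro member_le_sum) auto
      thus ?thesis using ys by simp
    qed
    define z where "z = (\<lambda>i. if i = r then 0 else if i = j then y i/2 + y r/2 else y i/2)"
    have sr: "(\<Sum>i\<in>{..<n} - {r}. y i) = 1 - y r"
      using sum.remove[of "{..<n}" r y] r ys by simp
    have "(\<Sum>i\<in>{..<n} - {r}. z i) = (\<Sum>i\<in>{..<n} - {r}. y i/2 + (if i = j then y r/2 else 0))"
      by (rule sum.cong) (auto simp: z_def)
    also have "\<dots> = (\<Sum>i\<in>{..<n} - {r}. y i)/2 + y r/2"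
      using j by (simp add: sum.distrib sum_divide_distrib)
    finally have zs: "(\<Sum>i\<in>{..<n} - {r}. z i) = 1/2" using sr by (simp add: field_simps)
    have z0: "\<forall>i<n. 0 \<le> z i" using y0 r by (auto simp: z_def add_nonneg_nonneg)
    have "liquid_welfare n v B z \<in> ?D" using zs z0 by (auto simp: z_def)
    hence WzD: "liquid_welfare n v B z \<le> dagger_liquid_welfare n v B r"
      unfolding dagger_liquid_welfare_def using bddD by (rule cSup_upper)
    have others: "(\<Sum>i\<in>{..<n} - {r}. min (v i (y i)) (B i)) \<le> 2 * (\<Sum>i\<in>{..<n} - {r}. min (v i (z i)) (B i))"
      unfolding sum_distrib_left
    proof (rule sum_mono)
      fix i assume i: "i \<in> {..<n} - {r}"
      have "min (v i (y i)) (B i) \<le> 2 * min (v i (y i/2)) (B i)"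
        using half[of i "y i"] i y0 yle by auto
      also have "v i (y i / 2) \<le> v i (z i)"
        using i y0 yle[of i] yle[of r] yle[of j] j r by (intro monoi) (auto simp: z_def)
      hence "2 * min (v i (y i/2)) (B i) \<le> 2 * min (v i (z i)) (B i)" by linarith
      finally show "min (v i (y i)) (B i) \<le> 2 * min (v i (z i)) (B i)" .
    qed
    have rterm: "min (v r (y r)) (B r) \<le> 2 * vbar v B r (1/2)"
    proof -
      have "min (v r (y r)) (B r) \<le> min (v r 1) (B r)"
        using monoi[of r "y r" 1] r y0 yle by force
      also have "\<dots> \<le> 2 * min (v r (1/2)) (B r)" using half[of r 1] r by simp
      finally show ?thesis by (simp add: vbar_def)
    qed
    have Wy: "liquid_welfare n v B y = min (v r (y r)) (B r) + (\<Sum>i\<in>{..<n} - {r}. min (v i (y i)) (B i))"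
      unfolding liquid_welfare_def using sum.remove[of "{..<n}" r] r by simp
    have Wz: "liquid_welfare n v B z = min (v r (z r)) (B r) + (\<Sum>i\<in>{..<n} - {r}. min (v i (z i)) (B i))"
      unfolding liquid_welfare_def using sum.remove[of "{..<n}" r] r by simp
    have "0 \<le> min (v r (z r)) (B r)" using nonneg[OF r, of 0] budget[OF r] by (simp add: z_def)
    thus ?thesis using Wy Wz others rterm WzD by linarith
  qed
  let ?O = "{liquid_welfare n v B y | y. (\<forall>i<n. 0 \<le> y i) \<and> (\<Sum>i<n. y i) = 1}"
  have ne: "?O \<noteq> {}"
  proof -
    have "(\<Sum>i<n. (if i = r then 1 else 0::real)) = 1" using r by (simp add: sum.delta)
    thus ?thesis by (intro ex_in_conv[THEN iffD1, OF exI[of _ "liquid_welfare n v B (\<lambda>i. if i = r then 1 else 0)"]]) auto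
  qed
  have "opt_liquid_welfare n v B \<le> 2 * vbar v B r (1/2) + 2 * dagger_liquid_welfare n v B r"
    unfolding opt_liquid_welfare_def using ne key by (intro cSup_least) auto
  thus ?thesis by simp
qed

end
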